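(* Let $K$ be a sequence of positive integers with $K_n=ab^n(1+o(1))$ as $n\to\infty$, where $a,b$ are positive real numbers such that $\log_\phi b$ is irrational. Then for every integer $s\ge 2$ and every $\mathbf b\in\mathcal{F}_s$, $$\lim_{n\to\infty}\frac{\#\{k\le n:\mathrm{LB}_s(K_k)=\mathbf b\}}{n}=\log_\phi\frac{\widetilde{\mathbf b}\cdot\widehat F}{\mathbf b\cdot\widehat F}.$$
   Context: $F$: $F_1=1,F_2=2,F_{n+2}=F_{n+1}+F_n$. Every positive integer $m$ has a unique Zeckendorf expansion $m=\sum_{k=1}^M\epsilon(k)F_{M-k+1}$ with $\epsilon(k)\in\{0,1\}$, $\epsilon(1)=1$, $\epsilon(k)\epsilon(k+1)=0$; $\mathrm{LB}_s(m):=(\epsilon(1),\dots,\epsilon(s))$ if $M\ge s$ (undefined otherwise). For $s\ge2$, $\mathcal{F}_s$ is the finite set of all tuples $\mathrm{LB}_s(m)$, $m\in\mathbb{N}$ (equivalently, 0/1 tuples of length $s$ starting with $1$ with no two consecutive $1$'s), listed as $\mathbf b_1,\dots,\mathbf b_\ell$ so that $1+\mathbf b_k*F=\mathbf b_{k+1}*F$ for $k\le\ell-1$, where $\mathbf b*F:=\sum_{k=1}^s\mathbf b(k)F_{s-k+1}$. Define $\mathbf b_{\ell+1}:=(1,0,1,0,\dots,1,0,1,1)$ if $s$ is even and $\mathbf b_{\ell+1}:=(1,0,1,0,\dots,1,0,1,1,0)$ if $s$ is odd (length $s$), and for $\mathbf b=\mathbf b_k$ set $\widetilde{\mathbf b}:=\mathbf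 b_{k+1}$. $\phi$ is the golden ratio, $\omega=\phi^{-1}$, and $\mathbf b\cdot\widehat F:=\sum_{k=1}^s\mathbf b(k)\omega^{k-1}$. *)

theory Defs
  imports Complex_Main
begin

text \<open>Fibonacci numbers with F 1 = 1, F 2 = 2 (F 0 = 1 is an auxiliary value, never used).\<close>
fun zF :: "nat \<Rightarrow> nat" where
  "zF 0 = 1"
| "zF (Suc 0) = 1"
| "zF (Suc (Suc n)) = zF (Suc n) + zF n"

definition zval :: "nat list \<Rightarrow> nat" where
  "zval eps = (\<Sum>k=1..length eps. eps ! (k - 1) * zF (length eps - k + 1))"

definition is_zeck :: "nat list \<Rightarrow> nat \<Rightarrow> bool" where
  "is_zeck eps m \<longleftrightarrow> eps \<noteq> [] \<and> hd eps = 1 \<and> set eps \<subseteq> {0, 1}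
     \<and> (\<forall>i. Suc i < length eps \<longrightarrow> eps ! i * eps ! Suc i = 0) \<and> zval eps = m"

definition zeck :: "nat \<Rightarrow> nat list" where
  "zeck m = (THE eps. is_zeck eps m)"

definition LB :: "nat \<Rightarrow> nat \<Rightarrow> nat list option" where
  "LB s m = (if s \<le> length (zeck m) then Some (take s (zeck m)) else None)"

definition Fs :: "nat \<Rightarrow> nat list set" where
  "Fs s = {bs. \<exists>m>0. LB s m = Some bs}"

definition last_succ :: "nat \<Rightarrow> nat list" where
  "last_succ s = (if even s then concat (replicate ((s - 2) div 2) [1, 0]) @ [1, 1]
                  else concat (replicate ((s - 3) div 2) [1, 0]) @ [1, 1, 0])"

definition succ_block :: "nat \<Rightarrow> nat list \<Rightarrow> nat list" where
  "succ_block s bs = (if \<exists>c\<in>Fs s. zval c = zval bs + 1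
     then (THE c. c \<in> Fs s \<and> zval c = zval bs + 1) else last_succ s)"

definition phi :: real where
  "phi = (1 + sqrt 5) / 2"

definition omega :: real where
  "omega = 1 / phi"

text \<open>b . F-hat = sum_k b(k) omega^(k-1).\<close>
definition dotw :: "nat list \<Rightarrow> real" where
  "dotw bs = (\<Sum>k=1..length bs. real (bs ! (k - 1)) * omega ^ (k - 1))"

end

theory Submission
  imports Defs "HOL-Analysis.Kronecker_Approximation_Theorem"
begin


fun ok :: "nat list \<Rightarrow> bool" where
  "ok [] = True"
| "ok [x] = (x \<le> 1)"
| "ok (x # y # xs) = (x \<le> 1 \<and> (x = 0 \<or> y = 0) \<and> ok (y # xs))"

lemma zval_Nil[simp]: "zval [] = 0"
  by (simp add: zval_def)

lemma zval_Cons[simp]: "zval (x # xs) = x * zF (length xs + 1) + zval xs"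
proof -
  let ?n = "length xs"
  have "zval (x # xs) = (\<Sum>k=1..Suc ?n. (x#xs) ! (k - 1) * zF (Suc ?n - k + 1))"
    by (simp add: zval_def)
  also have "\<dots> = x * zF (?n + 1) + (\<Sum>k=Suc 1..Suc ?n. (x#xs) ! (k - 1) * zF (Suc ?n - k + 1))"
    by (subst sum.atLeast_Suc_atMost) auto
  also have "(\<Sum>k=Suc 1..Suc ?n. (x#xs) ! (k - 1) * zF (Suc ?n - k + 1))
      = (\<Sum>k=1..?n. (x#xs) ! (Suc k - 1) * zF (Suc ?n - Suc k + 1))"
    by (rule sum.shift_bounds_cl_Suc_ivl)
  also have "\<dots> = zval xs"
    unfolding zval_def
    by (rule sum.cong) (auto simp: nth_Cons')
  finally show ?thesis .
qed

lemma all_nat_split: "(\<forall>i::nat. P i) \<longleftrightarrow> P 0 \<and> (\<forall>i. P (Suc i))"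
  by (metis not0_implies_Suc)

lemma ok_iff: "ok xs \<longleftrightarrow> set xs \<subseteq> {0, 1} \<and> (\<forall>i. Suc i < length xs \<longrightarrow> xs ! i * xs ! Suc i = 0)"
proof (induction xs rule: ok.induct)
  case 1 then show ?case by simp
next
  case (2 x) then show ?case by auto
next
  case (3 x y xs)
  show ?case
    apply (subst all_nat_split)
    using 3 by auto
qed

lemma ok_Cons: "ok (x # xs) \<Longrightarrow> ok xs"
  by (cases xs) auto

lemma ok_le1: "ok xs \<Longrightarrow> x \<in> set xs \<Longrightarrow> x \<le> 1"
  by (auto simp: ok_iff)

lemma zF_pos: "zF n > 0"
  by (induction n rule: zF.induct) auto

lemma zF_Suc_mono: "zF n \<le> zF (Suc n)"
  by (cases n) auto

lemma zF_mono: "m \<le> n \<Longrightarrow> zF m \<le> zF n"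
  by (induction n) (auto simp: le_Suc_eq intro: order.trans[OF _ zF_Suc_mono])

lemma zF_strict: "1 \<le> m \<Longrightarrow> m < n \<Longrightarrow> zF m < zF n"
proof (induction n)
  case 0 then show ?case by simp
next
  case (Suc n)
  have "zF n < zF (Suc n)"
    using Suc.prems zF_pos[of "n - 1"] by (cases n) auto
  then show ?case using Suc by (auto simp: less_Suc_eq)
qed

lemma zval_lt: "ok xs \<Longrightarrow> zval xs < zF (length xs + 1)"
proof (induction "length xs" arbitrary: xs rule: less_induct)
  case less
  show ?case
  proof (cases xs)
    case Nil then show ?thesis by simp
  next
    case (Cons x ys)
    show ?thesis
    proof (cases "x = 0")
      case True
      then have "zval ys < zF (length ys + 1)"
        using less Cons ok_Cons by auto
      then show ?thesis using True Cons zF_Suc_mono[of "length ys + 1"] by simp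
    next
      case False
      then have x: "x = 1" using less Cons by (auto dest: ok_le1)
      show ?thesis
      proof (cases ys)
        case Nil then show ?thesis using x Cons by simp
      next
        case (Cons y zs)
        then have y: "y = 0" using less \<open>xs = x # ys\<close> x by auto
        have "ok zs" using less \<open>xs = x # ys\<close> Cons by (metis ok_Cons)
        then have "zval zs < zF (length zs + 1)"
          using less \<open>xs = x # ys\<close> Cons by auto
        then show ?thesis using x y Cons \<open>xs = x # ys\<close>
          by (simp add: numeral_2_eq_2)
      qed
    qed
  qed
qed

lemma zval_ge: "xs \<noteq> [] \<Longrightarrow> hd xs = 1 \<Longrightarrow> zval xs \<ge> zF (length xs)"
  by (cases xs) auto


lemma ok_hd: "ok (x # xs) \<Longrightarrow> x \<le> 1"
  by (cases xs) auto

lemma ok_append: "ok (u @ v) \<Longrightarrow> ok u \<and> ok v"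
proof (induction u)
  case Nil then show ?case by simp
next
  case (Cons x u)
  then have "ok (u @ v)" by (metis append_Cons ok_Cons)
  with Cons.IH have *: "ok u" "ok v" by auto
  have "ok (x # u)"
  proof (cases u)
    case Nil then show ?thesis using Cons.prems ok_hd[of x v] by simp
  next
    case (Cons y w) then show ?thesis using Cons.prems * by simp
  qed
  then show ?case using * by simp
qed

lemma ok_zeros: "ok (replicate N (0::nat))"
proof (induction N)
  case (Suc N) then show ?case by (cases N) auto
qed simp

lemma ok_pad: "ok c \<Longrightarrow> ok (c @ replicate N 0)"
proof (induction c rule: ok.induct)
  case 1 then show ?case by (simp add: ok_zeros)
next
  case (2 x) then show ?case using ok_zeros[of N] by (cases N) auto
next
  case (3 x y xs) then show ?case by auto
qed

lemma zval_zeros[simp]: "zval (replicate n 0) = 0"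
  by (induction n) auto

lemma zval_zeros_app[simp]: "zval (replicate n 0 @ ys) = zval ys"
  by (induction n) auto

lemma zval_append: "zval (u @ v) = zval (u @ replicate (length v) 0) + zval v"
  by (induction u) (auto simp: zval_zeros_app[of _ "[]", simplified])

lemma zval_G:
  assumes "ok xs" "ok ys" "length xs = length ys" "i < length xs"
    "take i xs = take i ys" "xs ! i = 0" "ys ! i = 1"
  shows "zval xs < zval ys"
  using assms
proof (induction i arbitrary: xs ys)
  case 0
  then obtain xs' ys' where xs: "xs = 0 # xs'" and ys: "ys = 1 # ys'"
    by (cases xs; cases ys) auto
  have "zval xs' < zF (length xs' + 1)" using 0 xs by (intro zval_lt) (auto dest: ok_Cons)
  then show ?case using xs ys 0 by simp
next
  case (Suc i)
  then obtain x xs' y ys' where xs: "xs = x # xs'" and ys: "ys = y # ys'"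
    by (cases xs; cases ys) auto
  have "zval xs' < zval ys'"
    using Suc xs ys by (intro Suc.IH) (auto dest: ok_Cons)
  moreover have "x = y" using Suc xs ys by simp
  ultimately show ?case using xs ys Suc by simp
qed

lemma first_diff:
  "length xs = length ys \<Longrightarrow> xs \<noteq> ys \<Longrightarrow>
    \<exists>i<length xs. take i xs = take i ys \<and> xs ! i \<noteq> ys ! i"
proof (induction xs arbitrary: ys)
  case Nil then show ?case by simp
next
  case (Cons x xs)
  then obtain y ys' where ys: "ys = y # ys'" by (cases ys) auto
  show ?case
  proof (cases "x = y")
    case True
    then obtain i where "i < length xs" "take i xs = take i ys'" "xs ! i \<noteq> ys' ! i"
      using Cons ys by auto
    then show ?thesis using True ys by (intro exI[of _ "Suc i"]) auto
  next
    case False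
    then show ?thesis using ys by (intro exI[of _ 0]) auto
  qed
qed

lemma zval_inj:
  assumes "ok xs" "ok ys" "length xs = length ys" "zval xs = zval ys"
  shows "xs = ys"
proof (rule ccontr)
  assume "xs \<noteq> ys"
  then obtain i where i: "i < length xs" "take i xs = take i ys" "xs ! i \<noteq> ys ! i"
    using first_diff assms by blast
  have "xs ! i \<le> 1" "ys ! i \<le> 1" using assms i ok_le1[OF _ nth_mem] by auto
  then have "(xs ! i = 0 \<and> ys ! i = 1) \<or> (xs ! i = 1 \<and> ys ! i = 0)" using i by auto
  then show False
    using zval_G[of xs ys i] zval_G[of ys xs i] assms i by auto
qed

lemma zval_cmp:
  assumes "ok xs" "ok ys" "length xs = length ys" "zval xs < zval ys"
  shows "\<exists>i<length xs. take i xs = take i ys \<and> xs ! i = 0 \<and> ys ! i = 1"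
proof -
  have "xs \<noteq> ys" using assms by auto
  then obtain i where i: "i < length xs" "take i xs = take i ys" "xs ! i \<noteq> ys ! i"
    using first_diff assms by blast
  have "xs ! i \<le> 1" "ys ! i \<le> 1" using assms i ok_le1[OF _ nth_mem] by auto
  then have "(xs ! i = 0 \<and> ys ! i = 1) \<or> (xs ! i = 1 \<and> ys ! i = 0)" using i by auto
  then show ?thesis
    using zval_G[of ys xs i] assms i by auto
qed

lemma exists_rep: "m < zF (n + 1) \<Longrightarrow> \<exists>xs. length xs = n \<and> ok xs \<and> zval xs = m"
proof (induction n arbitrary: m rule: less_induct)
  case (less n)
  show ?case
  proof (cases n)
    case 0 then show ?thesis using less by (intro exI[of _ "[]"]) auto
  next
    case (Suc n1)
    show ?thesis
    proof (cases n1)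
      case 0 then show ?thesis using less Suc by (intro exI[of _ "[m]"]) auto
    next
      case (Suc n2)
      have F: "zF (n + 1) = zF n + zF n1" using Suc \<open>n = Suc n1\<close> by simp
      show ?thesis
      proof (cases "m < zF n")
        case True
        then obtain ys where "length ys = n1" "ok ys" "zval ys = m"
          using less.IH[of n1 m] \<open>n = Suc n1\<close> by auto
        then show ?thesis using \<open>n = Suc n1\<close>
          by (intro exI[of _ "0 # ys"]) (cases ys, auto)
      next
        case False
        have "m < zF n + zF n1" using less.prems F by simp
        then have "m - zF n < zF (n2 + 1)" using Suc zF_pos[of "Suc n2"] by simp
        then obtain ys where ys: "length ys = n2" "ok ys" "zval ys = m - zF n"
          using less.IH[of n2 "m - zF n"] \<open>n = Suc n1\<close> Suc by auto
        then show ?thesis using \<open>n = Suc n1\<close> Suc False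
          by (intro exI[of _ "1 # 0 # ys"]) (cases ys, auto)
      qed
    qed
  qed
qed


lemma zF_gt: "n < zF (Suc n)"
proof (induction n)
  case (Suc n) then show ?case using zF_pos[of n] by simp
qed simp

lemma is_zeck_iff: "is_zeck eps m \<longleftrightarrow> eps \<noteq> [] \<and> hd eps = 1 \<and> ok eps \<and> zval eps = m"
  unfolding is_zeck_def ok_iff by auto

lemma len_uniq:
  assumes "zF a \<le> m" "m < zF (a + 1)" "zF b \<le> m" "m < zF (b + 1)"
  shows "a = b"
proof (rule ccontr)
  assume "a \<noteq> b"
  then consider "a + 1 \<le> b" | "b + 1 \<le> a" by linarith
  then show False
    by cases (use assms zF_mono in fastforce)+
qed

lemma is_zeck_ex: "m > 0 \<Longrightarrow> \<exists>eps. is_zeck eps m"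
proof -
  assume m: "m > 0"
  obtain xs where xs: "length xs = m" "ok xs" "zval xs = m"
    using exists_rep[of m m] zF_gt[of m] by auto
  define ys where "ys = dropWhile (\<lambda>x. x = 0) xs"
  define zs where "zs = takeWhile (\<lambda>x. x = 0) xs"
  have "\<forall>y\<in>set zs. y = 0" unfolding zs_def by (auto dest: set_takeWhileD)
  then have zs: "replicate (length zs) 0 = zs" by (rule replicate_length_same)
  have eq0: "xs = zs @ ys" unfolding zs_def ys_def by simp
  then have eq: "xs = replicate (length zs) 0 @ ys" using zs by simp
  have zy: "zval ys = m" using xs(3) eq by simp
  have oky: "ok ys" using ok_append[of zs ys] xs(2) eq0 by simp
  have "ys \<noteq> []" using zy m by auto
  then have "hd ys \<noteq> 0" using hd_dropWhile[of "\<lambda>x. x = 0" xs] unfolding ys_def by simp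
  moreover have "hd ys \<le> 1" using oky \<open>ys \<noteq> []\<close> ok_le1 hd_in_set by blast
  ultimately have "hd ys = 1" by simp
  then show ?thesis using oky zy \<open>ys \<noteq> []\<close> is_zeck_iff by blast
qed

lemma is_zeck_uniq: "is_zeck e1 m \<Longrightarrow> is_zeck e2 m \<Longrightarrow> e1 = e2"
proof -
  assume a: "is_zeck e1 m" "is_zeck e2 m"
  have h1: "e1 \<noteq> [] \<and> hd e1 = 1 \<and> ok e1 \<and> zval e1 = m" using a(1) is_zeck_iff by blast
  have h2: "e2 \<noteq> [] \<and> hd e2 = 1 \<and> ok e2 \<and> zval e2 = m" using a(2) is_zeck_iff by blast
  have "zF (length e1) \<le> m" "m < zF (length e1 + 1)"
    using h1 zval_ge[of e1] zval_lt[of e1] by auto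
  moreover have "zF (length e2) \<le> m" "m < zF (length e2 + 1)"
    using h2 zval_ge[of e2] zval_lt[of e2] by auto
  ultimately have "length e1 = length e2" by (rule len_uniq)
  then show ?thesis using zval_inj[of e1 e2] h1 h2 by simp
qed

lemma zeck_prop: "m > 0 \<Longrightarrow> zeck m \<noteq> [] \<and> hd (zeck m) = 1 \<and> ok (zeck m) \<and> zval (zeck m) = m"
proof -
  assume "m > 0"
  then have "\<exists>!eps. is_zeck eps m" using is_zeck_ex is_zeck_uniq by blast
  then have "is_zeck (zeck m) m" unfolding zeck_def by (rule theI')
  then show ?thesis using is_zeck_iff by blast
qed

lemma zeck_eq: "c \<noteq> [] \<Longrightarrow> hd c = 1 \<Longrightarrow> ok c \<Longrightarrow> zeck (zval c) = c"
proof -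
  assume a: "c \<noteq> []" "hd c = 1" "ok c"
  have "zval c \<ge> zF (length c)" using zval_ge a by blast
  then have pos: "zval c > 0" using zF_pos[of "length c"] by linarith
  have "is_zeck c (zval c)" using a is_zeck_iff by blast
  moreover have "is_zeck (zeck (zval c)) (zval c)" using zeck_prop[OF pos] is_zeck_iff by blast
  ultimately show ?thesis using is_zeck_uniq by blast
qed

lemma LB_iff: "LB s m = Some bs \<longleftrightarrow> s \<le> length (zeck m) \<and> take s (zeck m) = bs"
  unfolding LB_def by auto

lemma Fs_iff: "s \<ge> 1 \<Longrightarrow> c \<in> Fs s \<longleftrightarrow> length c = s \<and> hd c = 1 \<and> ok c"
proof
  assume s: "s \<ge> 1" and "c \<in> Fs s"
  then obtain m where m: "m > 0" "LB s m = Some c" unfolding Fs_def by auto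
  then have c: "s \<le> length (zeck m)" "take s (zeck m) = c" using LB_iff by auto
  have z: "zeck m \<noteq> []" "hd (zeck m) = 1" "ok (zeck m)" using zeck_prop[OF m(1)] by auto
  have "ok c" using z(3) c ok_append by (metis append_take_drop_id)
  then show "length c = s \<and> hd c = 1 \<and> ok c" using c z s by auto
next
  assume s: "s \<ge> 1" and c: "length c = s \<and> hd c = 1 \<and> ok c"
  then have ne: "c \<noteq> []" by auto
  have "zval c \<ge> zF (length c)" using zval_ge ne c by blast
  then have pos: "zval c > 0" using zF_pos[of "length c"] by linarith
  have "LB s (zval c) = Some c" using zeck_eq[OF ne] c LB_iff by auto
  then show "c \<in> Fs s" unfolding Fs_def using pos by blast
qed

lemma Fs_val: "s \<ge> 1 \<Longrightarrow> c \<in> Fs s \<Longrightarrow> zF s \<le> zval c \<and> zval c < zF (s + 1)"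
  using Fs_iff zval_ge zval_lt by (metis list.size(3) not_one_le_zero)

lemma Fs_exists_val:
  assumes s: "s \<ge> 1" and v: "zF s \<le> v" "v < zF (s + 1)"
  shows "\<exists>c\<in>Fs s. zval c = v"
proof -
  obtain xs where xs: "length xs = s" "ok xs" "zval xs = v" using exists_rep v by blast
  then obtain x xs' where xx: "xs = x # xs'" using s by (cases xs) auto
  have "x \<noteq> 0"
  proof
    assume "x = 0"
    then have "zval xs' = v" using xs xx by simp
    moreover have "zval xs' < zF s" using zval_lt[of xs'] xs xx ok_Cons by fastforce
    ultimately show False using v by simp
  qed
  moreover have "x \<le> 1" using xs xx ok_hd by blast
  ultimately have "hd xs = 1" using xx by simp
  then show ?thesis using Fs_iff[OF s] xs by blast
qed

lemma succ_cases:
  assumes s: "s \<ge> 1" and bs: "bs \<in> Fs s"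
  shows "(succ_block s bs \<in> Fs s \<and> zval (succ_block s bs) = zval bs + 1)
       \<or> (succ_block s bs = last_succ s \<and> zval bs + 1 = zF (s + 1))"
proof (cases "\<exists>c\<in>Fs s. zval c = zval bs + 1")
  case True
  have "\<exists>!c. c \<in> Fs s \<and> zval c = zval bs + 1"
    using True zval_inj Fs_iff[OF s] by metis
  from theI'[OF this]
  have "succ_block s bs \<in> Fs s \<and> zval (succ_block s bs) = zval bs + 1"
    unfolding succ_block_def using True by simp
  then show ?thesis by blast
next
  case False
  have "zF s \<le> zval bs + 1" using Fs_val[OF s bs] by simp
  moreover have "zval bs + 1 \<le> zF (s + 1)" using Fs_val[OF s bs] by simp
  ultimately have "zval bs + 1 = zF (s + 1)"
    using Fs_exists_val[OF s] False by fastforce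
  moreover have "succ_block s bs = last_succ s" unfolding succ_block_def using False by simp
  ultimately show ?thesis by blast
qed

lemma ls_aux: "zval R = zF (length R + 1) \<Longrightarrow>
  zval (concat (replicate j [1, 0]) @ R) = zF (2 * j + length R + 1)"
proof (induction j)
  case (Suc j)
  have "zval (concat (replicate (Suc j) [1, 0]) @ R)
      = zF (2 * j + length R + 2) + zF (2 * j + length R + 1)"
    using Suc by (simp add: length_concat sum_list_replicate mult_2)
  also have "\<dots> = zF (2 * Suc j + length R + 1)"
    by (simp add: numeral_2_eq_2)
  finally show ?case .
qed simp

lemma last_succ_shape:
  assumes "s \<ge> 2"
  shows "\<exists>q. (s = 2 * q + 2 \<and> last_succ s = concat (replicate q [1, 0]) @ [1, 1])
           \<or> (s = 2 * q + 3 \<and> last_succ s = concat (replicate q [1, 0]) @ [1, 1, 0])"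
proof (cases "even s")
  case True
  then obtain k where k: "s = 2 * k" by (rule evenE)
  define q where "q = k - 1"
  have q: "s = 2 * q + 2" using k assms unfolding q_def by simp
  then have "(s - 2) div 2 = q" by simp
  then show ?thesis using q True unfolding last_succ_def by auto
next
  case False
  then obtain k where k: "s = 2 * k + 1" by (rule oddE)
  define q where "q = k - 1"
  have q: "s = 2 * q + 3" using k assms unfolding q_def by simp
  then have "(s - 3) div 2 = q" by simp
  then show ?thesis using q False unfolding last_succ_def by auto
qed

lemma last_succ_len: "s \<ge> 2 \<Longrightarrow> length (last_succ s) = s"
  using last_succ_shape[of s] by (auto simp: length_concat sum_list_replicate)

lemma last_succ_hd: "s \<ge> 2 \<Longrightarrow> last_succ s \<noteq> [] \<and> hd (last_succ s) = 1"
  using last_succ_shape[of s] by (auto, case_tac q, auto)+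

lemma last_succ_zval: "s \<ge> 2 \<Longrightarrow> zval (last_succ s @ replicate N 0) = zF (s + N + 1)"
proof -
  assume s: "s \<ge> 2"
  then obtain q where q: "(s = 2 * q + 2 \<and> last_succ s = concat (replicate q [1, 0]) @ [1, 1])
           \<or> (s = 2 * q + 3 \<and> last_succ s = concat (replicate q [1, 0]) @ [1, 1, 0])"
    using last_succ_shape by blast
  then show ?thesis
  proof
    assume a: "s = 2 * q + 2 \<and> last_succ s = concat (replicate q [1, 0]) @ [1, 1]"
    let ?R = "[1, 1] @ replicate N (0::nat)"
    have R: "zval ?R = zF (length ?R + 1)" by (simp add: numeral_2_eq_2 numeral_3_eq_3)
    have e: "last_succ s @ replicate N 0 = concat (replicate q [1, 0]) @ ?R"
      using a[THEN conjunct2] by simp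
    have "zval (last_succ s @ replicate N 0) = zF (2 * q + length ?R + 1)"
      unfolding e by (rule ls_aux[OF R])
    moreover have len: "2 * q + length ?R + 1 = s + N + 1" using a by simp
    ultimately show ?thesis by (simp only: len)
  next
    assume a: "s = 2 * q + 3 \<and> last_succ s = concat (replicate q [1, 0]) @ [1, 1, 0]"
    let ?R = "[1, 1, 0] @ replicate N (0::nat)"
    have R: "zval ?R = zF (length ?R + 1)" by (simp add: numeral_2_eq_2 numeral_3_eq_3)
    have e: "last_succ s @ replicate N 0 = concat (replicate q [1, 0]) @ ?R"
      using a[THEN conjunct2] by simp
    have "zval (last_succ s @ replicate N 0) = zF (2 * q + length ?R + 1)"
      unfolding e by (rule ls_aux[OF R])
    moreover have len: "2 * q + length ?R + 1 = s + N + 1" using a by simp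
    ultimately show ?thesis by (simp only: len)
  qed
qed


lemma interval_lemma:
  assumes okpt: "ok (p @ t)" and okc: "ok c" and len: "length c = length p"
  shows "zval (c @ replicate (length t) 0) \<le> zval (p @ t) \<longleftrightarrow> zval c \<le> zval p"
proof -
  have okp: "ok p" using ok_append okpt by blast
  have okc0: "ok (c @ replicate (length t) 0)" using ok_pad okc by blast
  consider "zval c = zval p" | "zval c < zval p" | "zval p < zval c" by linarith
  then show ?thesis
  proof cases
    case 1
    then have "c = p" using zval_inj okc okp len by blast
    then show ?thesis using zval_append[of p t] 1 by simp
  next
    case 2
    then obtain i where i: "i < length c" "take i c = take i p" "c ! i = 0" "p ! i = 1"
      using zval_cmp okc okp len by blast
    have "zval (c @ replicate (length t) 0) < zval (p @ t)"
      by (rule zval_G[of _ _ i]) (use okc0 okpt len i in \<open>auto simp: nth_append\<close>)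
    then show ?thesis using 2 by simp
  next
    case 3
    then obtain i where i: "i < length p" "take i p = take i c" "p ! i = 0" "c ! i = 1"
      using zval_cmp okc okp len by metis
    have "zval (p @ t) < zval (c @ replicate (length t) 0)"
      by (rule zval_G[of _ _ i]) (use okc0 okpt len i in \<open>auto simp: nth_append\<close>)
    then show ?thesis using 3 by simp
  qed
qed

lemma LB_interval:
  assumes s: "s \<ge> 2" and bs: "bs \<in> Fs s" and m: "m > 0"
  shows "LB s m = Some bs \<longleftrightarrow>
    (\<exists>N. zval (bs @ replicate N 0) \<le> m \<and> m < zval (succ_block s bs @ replicate N 0))"
proof -
  have s1: "s \<ge> 1" using s by simp
  define z where "z = zeck m"
  have z: "z \<noteq> []" "hd z = 1" "ok z" "zval z = m" using zeck_prop[OF m] z_def by auto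
  have bsp: "length bs = s" "hd bs = 1" "ok bs" using Fs_iff[OF s1] bs by auto
  let ?sc = "succ_block s bs"
  have sc: "(?sc \<in> Fs s \<and> zval ?sc = zval bs + 1) \<or> (?sc = last_succ s \<and> zval bs + 1 = zF (s + 1))"
    using succ_cases[OF s1 bs] .
  show ?thesis
  proof
    assume "LB s m = Some bs"
    then have a: "s \<le> length z" "take s z = bs" using LB_iff z_def by auto
    define t where "t = drop s z"
    have zz: "z = bs @ t" using a t_def by (metis append_take_drop_id)
    have lo: "zval (bs @ replicate (length t) 0) \<le> m"
      using interval_lemma[of bs t bs] z zz bsp by simp
    have hi: "m < zval (?sc @ replicate (length t) 0)"
      using sc
    proof
      assume c: "?sc \<in> Fs s \<and> zval ?sc = zval bs + 1"
      then have "ok ?sc" "length ?sc = s" using Fs_iff[OF s1] by auto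
      then show ?thesis using interval_lemma[of bs t ?sc] z zz bsp c by simp
    next
      assume c: "?sc = last_succ s \<and> zval bs + 1 = zF (s + 1)"
      have "m < zF (length z + 1)" using zval_lt z by metis
      then show ?thesis using c last_succ_zval[OF s] zz bsp by simp
    qed
    show "\<exists>N. zval (bs @ replicate N 0) \<le> m \<and> m < zval (?sc @ replicate N 0)"
      using lo hi by blast
  next
    assume "\<exists>N. zval (bs @ replicate N 0) \<le> m \<and> m < zval (?sc @ replicate N 0)"
    then obtain N where N: "zval (bs @ replicate N 0) \<le> m" "m < zval (?sc @ replicate N 0)"
      by blast
    have "zF (s + N) \<le> zval (bs @ replicate N 0)"
    proof -
      have ne: "bs \<noteq> []" using bsp s by auto
      then show ?thesis using zval_ge[of "bs @ replicate N 0"] bsp hd_append2[OF ne] by simp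
    qed
    then have lo: "zF (s + N) \<le> m" using N by linarith
    have "zval (?sc @ replicate N 0) \<le> zF (s + N + 1)"
      using sc
    proof
      assume c: "?sc \<in> Fs s \<and> zval ?sc = zval bs + 1"
      then have "ok ?sc" "length ?sc = s" using Fs_iff[OF s1] by auto
      then show ?thesis using zval_lt[of "?sc @ replicate N 0"] ok_pad by fastforce
    next
      assume c: "?sc = last_succ s \<and> zval bs + 1 = zF (s + 1)"
      then show ?thesis using last_succ_zval[OF s] by simp
    qed
    then have hi: "m < zF (s + N + 1)" using N by linarith
    have "zF (length z) \<le> m" "m < zF (length z + 1)" using z zval_ge zval_lt by metis+
    then have lz: "length z = s + N" using len_uniq lo hi by metis
    define p where "p = take s z"
    define t where "t = drop s z"
    have zz: "z = p @ t" unfolding p_def t_def by simp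
    have lp: "length p = s" "length t = N" using lz p_def t_def by auto
    have okp: "ok p" using ok_append z zz by blast
    have ge: "zval bs \<le> zval p"
      using interval_lemma[of p t bs] z zz bsp lp N by simp
    have le: "zval p \<le> zval bs"
      using sc
    proof
      assume c: "?sc \<in> Fs s \<and> zval ?sc = zval bs + 1"
      then have "ok ?sc" "length ?sc = s" using Fs_iff[OF s1] by auto
      then show ?thesis using interval_lemma[of p t ?sc] z zz lp N c by simp
    next
      assume c: "?sc = last_succ s \<and> zval bs + 1 = zF (s + 1)"
      then show ?thesis using zval_lt[OF okp] lp by simp
    qed
    then have "p = bs" using ge zval_inj[OF okp bsp(3)] lp bsp by simp
    then show "LB s m = Some bs" using LB_iff z_def lz p_def by simp
  qed
qed


lemma sqrt5: "sqrt 5 * sqrt 5 = (5::real)" "sqrt 5 > (2::real)" "sqrt 5 < (3::real)"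
proof -
  show "sqrt 5 * sqrt 5 = (5::real)" by simp
  show "sqrt 5 > (2::real)" by (rule real_less_rsqrt) simp
  show "sqrt 5 < (3::real)"
  proof (rule ccontr)
    assume "\<not> sqrt 5 < (3::real)"
    then have "3 * 3 \<le> sqrt 5 * sqrt (5::real)" by (intro mult_mono) auto
    then show False by simp
  qed
qed

lemma phi_sq: "phi * phi = phi + 1"
  unfolding phi_def using sqrt5(1) by (simp add: field_simps)

lemma phi_gt1: "phi > 1" and phi_lt2: "phi < 2"
  unfolding phi_def using sqrt5 by auto

lemma omega_phi: "omega * phi = 1"
  unfolding omega_def using phi_gt1 by simp

lemma omega_eq: "omega = phi - 1"
  using phi_sq phi_gt1 unfolding omega_def by (simp add: field_simps)

lemma omega_pos: "omega > 0" and omega_lt1: "omega < 1"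
  using omega_eq phi_gt1 phi_lt2 by auto

lemma dotw_Nil[simp]: "dotw [] = 0"
  by (simp add: dotw_def)

lemma dotw_Cons[simp]: "dotw (x # xs) = real x + omega * dotw xs"
proof -
  let ?n = "length xs"
  have "dotw (x # xs) = (\<Sum>k=1..Suc ?n. real ((x#xs) ! (k - 1)) * omega ^ (k - 1))"
    by (simp add: dotw_def)
  also have "\<dots> = real x + (\<Sum>k=Suc 1..Suc ?n. real ((x#xs) ! (k - 1)) * omega ^ (k - 1))"
    by (subst sum.atLeast_Suc_atMost) auto
  also have "(\<Sum>k=Suc 1..Suc ?n. real ((x#xs) ! (k - 1)) * omega ^ (k - 1))
      = (\<Sum>k=1..?n. real ((x#xs) ! (Suc k - 1)) * omega ^ (Suc k - 1))"
    by (rule sum.shift_bounds_cl_Suc_ivl)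
  also have "\<dots> = omega * dotw xs"
    unfolding dotw_def sum_distrib_left
    by (rule sum.cong) (auto simp: nth_Cons' power_eq_if)
  finally show ?thesis .
qed

lemma dotw_nonneg: "dotw xs \<ge> 0"
  by (induction xs) (auto intro!: add_nonneg_nonneg mult_nonneg_nonneg simp: less_imp_le[OF omega_pos])

lemma dotw_lt: "ok xs \<Longrightarrow> dotw xs < phi"
proof (induction "length xs" arbitrary: xs rule: less_induct)
  case less
  show ?case
  proof (cases xs)
    case Nil then show ?thesis using phi_gt1 by simp
  next
    case (Cons x ys)
    show ?thesis
    proof (cases "x = 0")
      case True
      then have "dotw ys < phi"
        using less Cons ok_Cons by auto
      then have "omega * dotw ys < omega * phi" using omega_pos by simp
      then show ?thesis using True Cons omega_phi phi_gt1 by simp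
    next
      case False
      then have x: "x = 1" using less Cons by (auto dest: ok_le1)
      show ?thesis
      proof (cases ys)
        case Nil then show ?thesis using x Cons phi_gt1 by simp
      next
        case (Cons y zs)
        then have y: "y = 0" using less \<open>xs = x # ys\<close> x by auto
        have "ok zs" using less \<open>xs = x # ys\<close> Cons by (metis ok_Cons)
        then have "dotw zs < phi"
          using less \<open>xs = x # ys\<close> Cons by auto
        then have "omega * (omega * dotw zs) < omega * (omega * phi)"
          using omega_pos by simp
        also have "omega * (omega * phi) = omega" using omega_phi by simp
        finally show ?thesis using x y Cons \<open>xs = x # ys\<close> omega_eq by simp
      qed
    qed
  qed
qed

lemma dotw_G:
  assumes "ok xs" "ok ys" "length xs = length ys" "i < length xs"
    "take i xs = take i ys" "xs ! i = 0" "ys ! i = 1"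
  shows "dotw xs < dotw ys"
  using assms
proof (induction i arbitrary: xs ys)
  case 0
  then obtain xs' ys' where xs: "xs = 0 # xs'" and ys: "ys = 1 # ys'"
    by (cases xs; cases ys) auto
  have "dotw xs' < phi" using 0 xs by (intro dotw_lt) (auto dest: ok_Cons)
  then have "omega * dotw xs' < 1" using omega_pos omega_phi
    by (metis mult_strict_left_mono)
  moreover have "omega * dotw ys' \<ge> 0" using omega_pos dotw_nonneg by simp
  ultimately show ?case using xs ys by simp
next
  case (Suc i)
  then obtain x xs' y ys' where xs: "xs = x # xs'" and ys: "ys = y # ys'"
    by (cases xs; cases ys) auto
  have "dotw xs' < dotw ys'"
    using Suc xs ys by (intro Suc.IH) (auto dest: ok_Cons)
  moreover have "x = y" using Suc xs ys by simp
  ultimately show ?case using xs ys omega_pos by simp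
qed

lemma dotw_mono:
  assumes "ok xs" "ok ys" "length xs = length ys" "zval xs < zval ys"
  shows "dotw xs < dotw ys"
  using zval_cmp[OF assms] dotw_G assms by blast

lemma dotw_ge1: "xs \<noteq> [] \<Longrightarrow> hd xs = 1 \<Longrightarrow> dotw xs \<ge> 1"
  using omega_pos dotw_nonneg by (cases xs) auto

lemma dotw_ls_aux: "dotw R = phi \<Longrightarrow> dotw (concat (replicate j [1, 0]) @ R) = phi"
proof (induction j)
  case (Suc j)
  then show ?case using omega_eq omega_phi by (simp add: algebra_simps)
qed simp

lemma dotw_last_succ: "s \<ge> 2 \<Longrightarrow> dotw (last_succ s) = phi"
proof -
  assume s: "s \<ge> 2"
  then obtain q where q: "(s = 2 * q + 2 \<and> last_succ s = concat (replicate q [1, 0]) @ [1, 1])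
           \<or> (s = 2 * q + 3 \<and> last_succ s = concat (replicate q [1, 0]) @ [1, 1, 0])"
    using last_succ_shape by blast
  have "dotw [1, 1] = phi" "dotw [1, 1, 0] = phi" using omega_eq by auto
  then show ?thesis using q dotw_ls_aux by metis
qed

definition psi :: real where "psi = 1 - phi"

lemma fibpow: "x * x = x + 1 \<Longrightarrow> (x::real) ^ (n + 3) = x ^ (n + 2) + x ^ (n + 1)"
proof -
  assume h: "x * x = x + 1"
  have a: "x ^ (n + 3) = x ^ (n + 1) * (x * x)"
    by (simp add: power_add power3_eq_cube power2_eq_square numeral_3_eq_3 numeral_2_eq_2 mult.assoc)
  have b: "x ^ (n + 2) = x ^ (n + 1) * x"
    by (simp add: numeral_2_eq_2)
  show ?thesis using a b h by (simp add: algebra_simps)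
qed

lemma psi_sq: "psi * psi = psi + 1"
  using phi_sq unfolding psi_def by (simp add: algebra_simps)

lemma binet: "real (zF n) = (phi ^ (n + 1) - psi ^ (n + 1)) / sqrt 5"
proof (induction n rule: zF.induct)
  case 1 then show ?case unfolding psi_def phi_def by simp
next
  case 2 then show ?case unfolding psi_def phi_def using sqrt5(1)
    by (simp add: field_simps power2_eq_square)
next
  case (3 n)
  have p: "phi ^ (n + 3) = phi ^ (n + 2) + phi ^ (n + 1)"
    using fibpow phi_sq by blast
  have q: "psi ^ (n + 3) = psi ^ (n + 2) + psi ^ (n + 1)"
    using fibpow psi_sq by blast
  show ?case using 3 p q
    by (simp add: numeral_3_eq_3 numeral_2_eq_2 diff_divide_distrib add_divide_distrib)
qed

lemma binet_err: "\<bar>real (zF n) - phi ^ (n + 1) / sqrt 5\<bar> \<le> 1"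
proof -
  have "\<bar>psi\<bar> \<le> 1" unfolding psi_def using phi_gt1 phi_lt2 by auto
  then have "\<bar>psi\<bar> ^ (n + 1) \<le> 1" by (intro power_le_one) auto
  then have "\<bar>psi ^ (n + 1)\<bar> \<le> 1" by (simp only: power_abs)
  then have "\<bar>psi ^ (n + 1)\<bar> / sqrt 5 \<le> 1" using sqrt5 by simp
  moreover have "real (zF n) - phi ^ (n + 1) / sqrt 5 = - (psi ^ (n + 1) / sqrt 5)"
    using binet[of n] by (simp add: diff_divide_distrib)
  ultimately show ?thesis by simp
qed

lemma abs_add_le1: "\<bar>a\<bar> \<le> 1 \<Longrightarrow> \<bar>b\<bar> \<le> l \<Longrightarrow> \<bar>a + b\<bar> \<le> l + (1::real)"
  by linarith

lemma zval_asym: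
  "\<forall>x\<in>set c. x \<le> 1 \<Longrightarrow> \<bar>real (zval (c @ replicate N 0)) - phi ^ (length c + N + 1) / sqrt 5 * dotw c\<bar> \<le> length c"
proof (induction c)
  case Nil then show ?case by simp
next
  case (Cons x c)
  have x: "x \<le> 1" using Cons.prems by simp
  have IH: "\<bar>real (zval (c @ replicate N 0)) - phi ^ (length c + N + 1) / sqrt 5 * dotw c\<bar> \<le> length c"
    using Cons by simp
  let ?k = "length c + N + 1"
  have e: "phi ^ (?k + 1) / sqrt 5 * dotw (x # c)
      = real x * (phi ^ (?k + 1) / sqrt 5) + phi ^ ?k / sqrt 5 * dotw c"
  proof -
    have "phi ^ (?k + 1) * omega = phi ^ ?k" using omega_phi by (simp add: algebra_simps)
    then show ?thesis by (simp add: algebra_simps add_divide_distrib) (metis mult.assoc mult.commute times_divide_eq_left)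
  qed
  have "real (zval ((x # c) @ replicate N 0)) = real x * real (zF ?k) + real (zval (c @ replicate N 0))"
    by simp
  then have eqD: "real (zval ((x # c) @ replicate N 0)) - phi ^ (?k + 1) / sqrt 5 * dotw (x # c)
      = real x * (real (zF ?k) - phi ^ (?k + 1) / sqrt 5)
        + (real (zval (c @ replicate N 0)) - phi ^ ?k / sqrt 5 * dotw c)"
    using e by (simp add: algebra_simps)
  moreover have h1: "\<bar>real x * (real (zF ?k) - phi ^ (?k + 1) / sqrt 5)\<bar> \<le> 1"
    using binet_err[of ?k] x by (simp add: abs_mult mult_le_one)
  ultimately have "\<bar>real (zval ((x # c) @ replicate N 0)) - phi ^ (?k + 1) / sqrt 5 * dotw (x # c)\<bar>
     \<le> real (length c) + 1" unfolding eqD by (intro abs_add_le1 IH)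
  then show ?case by (simp add: add_ac)
qed

lemma concat10_le1: "\<forall>x\<in>set (concat (replicate q [1::nat, 0])). x \<le> 1"
  by (induction q) auto

lemma last_succ_le1: "s \<ge> 2 \<Longrightarrow> \<forall>x\<in>set (last_succ s). x \<le> 1"
proof -
  assume "s \<ge> 2"
  then obtain q where q: "(s = 2 * q + 2 \<and> last_succ s = concat (replicate q [1, 0]) @ [1, 1])
           \<or> (s = 2 * q + 3 \<and> last_succ s = concat (replicate q [1, 0]) @ [1, 1, 0])"
    using last_succ_shape by blast
  then show ?thesis using concat10_le1[of q] by auto
qed

lemma ok_le1': "ok c \<Longrightarrow> \<forall>x\<in>set c. x \<le> 1"
  using ok_le1 by blast


lemma lo_arith:
  fixes AN db dc P m s ph :: real
  assumes AN: "AN > 0" and db: "db \<ge> 1" and dc: "dc \<le> ph" and P: "P > 1" and ph: "ph > 1"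
    and h1: "AN * db * P < m" and h2: "m * P < AN * dc" and s: "s \<ge> 0"
    and T: "s * ph \<le> m * (P - 1)"
  shows "AN * db + s \<le> m" "m + s < AN * dc"
proof -
  have "AN * db * P > 0" using AN db P by simp
  then have mpos: "m > 0" using h1 by linarith
  have "s \<le> s * ph" using s ph by (simp add: mult_le_cancel_left1)
  then have "s \<le> m * (P - 1)" using T by linarith
  then have "m + s \<le> m * P" by (simp add: algebra_simps)
  then show "m + s < AN * dc" using h2 by linarith
  have "m < m * P" using mpos P by simp
  then have "m < AN * dc" using h2 by linarith
  also have "\<dots> \<le> AN * ph" using dc AN by simp
  finally have mA: "m \<le> AN * ph" by simp
  have h3: "AN * (P - 1) \<le> AN * db * (P - 1)" using db AN P by simp
  have "m * (P - 1) \<le> AN * ph * (P - 1)" using mA P by (simp add: mult_right_mono)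
  then have "s * ph \<le> (AN * (P - 1)) * ph" using T by (simp add: algebra_simps)
  then have "s \<le> AN * (P - 1)" using ph by simp
  then have "AN * db + s \<le> AN * db + AN * db * (P - 1)" using h3 by linarith
  also have "\<dots> = AN * db * P" by (simp add: algebra_simps)
  finally show "AN * db + s \<le> m" using h1 by linarith
qed

lemma up_arith:
  fixes AN db dc P Q m s ph :: real
  assumes AN: "AN > 0" and db: "db \<ge> 1" and dc1: "dc \<ge> 1" and dc: "dc \<le> ph" and Q: "0 < Q" "Q < 1"
    and PQ: "P * Q = 1" and ph: "ph > 1"
    and h1: "AN * db - s \<le> m" and h2: "m < AN * dc + s" and s: "s \<ge> 0"
    and T: "2 * s * ph \<le> m * (1 - Q)"
  shows "AN * db * Q \<le> m" "m \<le> AN * dc * P"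
proof -
  have "P = 1 / Q" using PQ Q by (simp add: field_simps)
  then have P: "P > 1" using Q by simp
  have "2 * s \<le> 2 * s * ph" using s ph by (simp add: mult_le_cancel_left1)
  then have sm: "2 * s \<le> m * (1 - Q)" using T by linarith
  then have "m * (1 - Q) \<ge> 0" using s by linarith
  then have mnn: "m \<ge> 0" using Q by (simp add: zero_le_mult_iff)
  have "m * (1 - Q) \<le> m" using mnn Q by (simp add: mult_left_le)
  then have "2 * s \<le> m" using sm by linarith
  have "AN * dc \<le> AN * ph" using dc AN by simp
  then have "m - s < AN * ph" using h2 by linarith
  then have "m / 2 < AN * ph" using \<open>2 * s \<le> m\<close> by linarith
  then have "(m / 2) * (1 - Q) \<le> AN * ph * (1 - Q)" using Q
    by (intro mult_right_mono) auto
  then have "m * (1 - Q) / 2 \<le> AN * ph * (1 - Q)" by simp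
  moreover have "s * ph \<le> m * (1 - Q) / 2" using T by simp
  ultimately have "s * ph \<le> AN * ph * (1 - Q)" by linarith
  then have "s * ph \<le> AN * (1 - Q) * ph" by (simp add: algebra_simps)
  then have sA: "s \<le> AN * (1 - Q)" using ph by simp
  have "AN * (1 - Q) \<le> AN * db * (1 - Q)" using db AN Q by simp
  then have "AN * db * Q \<le> AN * db - s" using sA by (simp add: algebra_simps)
  then show "AN * db * Q \<le> m" using h1 by linarith
  have "1 - Q \<le> P - 1"
  proof -
    have "P - 1 = P * (1 - Q)" using PQ by (simp add: algebra_simps)
    also have "\<dots> \<ge> 1 * (1 - Q)" using P Q by (intro mult_right_mono) auto
    finally show ?thesis by simp
  qed
  then have "AN * (1 - Q) \<le> AN * (P - 1)" using AN by simp
  also have "\<dots> \<le> AN * dc * (P - 1)"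
  proof -
    have "AN * (P - 1) * 1 \<le> AN * (P - 1) * dc" using AN P dc1 by (intro mult_left_mono) auto
    then show ?thesis by (simp add: algebra_simps)
  qed
  finally have "AN * (1 - Q) \<le> AN * dc * (P - 1)" .
  then have "AN * dc + s \<le> AN * dc * P" using sA by (simp add: algebra_simps)
  then show "m \<le> AN * dc * P" using h2 by linarith
qed


definition AA :: "nat \<Rightarrow> real" where "AA s = phi ^ (s + 1) / sqrt 5"

lemma AA_pos: "AA s > 0"
  unfolding AA_def using phi_gt1 by simp

lemma AN_eq: "phi ^ (s + N + 1) / sqrt 5 = AA s * phi ^ N"
  unfolding AA_def by (simp add: power_add algebra_simps)

lemma phi_ne1: "phi \<noteq> 1" and phi_pos: "phi > 0"
  using phi_gt1 by auto

lemma log_AN: "x > 0 \<Longrightarrow> y > 0 \<Longrightarrow>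
  log phi (AA s * phi ^ N * x * y) = log phi (AA s) + real N + log phi x + log phi y"
  using AA_pos phi_pos phi_ne1
  by (simp add: log_mult_pos)

lemma block_facts:
  assumes s: "s \<ge> 2" and bs: "bs \<in> Fs s"
  shows "1 \<le> dotw bs" "dotw bs < dotw (succ_block s bs)" "dotw (succ_block s bs) \<le> phi"
    "\<forall>x\<in>set (succ_block s bs). x \<le> 1" "\<forall>x\<in>set bs. x \<le> 1"
proof -
  have s1: "s \<ge> 1" using s by simp
  have bsp: "length bs = s" "hd bs = 1" "ok bs" using Fs_iff[OF s1] bs by auto
  show "1 \<le> dotw bs" using dotw_ge1 bsp s by (metis list.size(3) not_numeral_le_zero)
  show "\<forall>x\<in>set bs. x \<le> 1" using ok_le1' bsp by blast
  let ?sc = "succ_block s bs"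
  have sc: "(ok ?sc \<and> length ?sc = s \<and> zval bs < zval ?sc) \<or> ?sc = last_succ s"
    using succ_cases[OF s1 bs] Fs_iff[OF s1] by auto
  show "dotw bs < dotw ?sc"
    using sc dotw_mono[of bs ?sc] bsp dotw_last_succ[OF s] dotw_lt[OF bsp(3)] by auto
  show "dotw ?sc \<le> phi"
    using sc dotw_lt[of ?sc] dotw_last_succ[OF s] by (auto intro: less_imp_le)
  show "\<forall>x\<in>set ?sc. x \<le> 1"
    using sc ok_le1' last_succ_le1[OF s] by auto
qed

lemma PQ_facts:
  assumes "\<eta> > 0"
  shows "phi powr \<eta> > 1" "phi powr (-\<eta>) > 0" "phi powr (-\<eta>) < 1"
    "phi powr \<eta> * phi powr (-\<eta>) = 1" "1 - phi powr (-\<eta>) \<le> phi powr \<eta> - 1"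
proof -
  show P: "phi powr \<eta> > 1" using assms phi_gt1 by simp
  show "phi powr (-\<eta>) > 0" using phi_pos by simp
  have "phi powr (-\<eta>) < phi powr 0" using assms phi_gt1 by (intro powr_less_mono) auto
  then show "phi powr (-\<eta>) < 1" using phi_pos by simp
  show PQ: "phi powr \<eta> * phi powr (-\<eta>) = 1" using phi_pos by (simp add: powr_add[symmetric])
  have "phi powr \<eta> - 1 = phi powr \<eta> * (1 - phi powr (-\<eta>))" using PQ by (simp add: algebra_simps)
  also have "\<dots> \<ge> 1 * (1 - phi powr (-\<eta>))"
    using P \<open>phi powr (-\<eta>) < 1\<close> by (intro mult_right_mono) auto
  finally show "1 - phi powr (-\<eta>) \<le> phi powr \<eta> - 1" by simp
qed

lemma lo_step:
  assumes s: "s \<ge> 2" and bs: "bs \<in> Fs s" and eta: "\<eta> > 0" and m: "m > 0"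
    and u1: "log phi (dotw bs) + \<eta> < log phi (real m) - log phi (AA s) - real N"
    and u2: "log phi (real m) - log phi (AA s) - real N < log phi (dotw (succ_block s bs)) - \<eta>"
    and T: "2 * real s * phi \<le> real m * (1 - phi powr (-\<eta>))"
  shows "LB s m = Some bs"
proof -
  let ?sc = "succ_block s bs"
  define P where "P = phi powr \<eta>"
  define Q where "Q = phi powr (-\<eta>)"
  define AN where "AN = AA s * phi ^ N"
  define db where "db = dotw bs"
  define dc where "dc = dotw ?sc"
  note bf = block_facts[OF s bs]
  have P: "P > 1" "1 - Q \<le> P - 1" using PQ_facts[OF eta] unfolding P_def Q_def by auto
  have db: "db \<ge> 1" "db > 0" using bf unfolding db_def by auto
  have dc: "dc \<le> phi" "dc > 0" using bf unfolding dc_def db_def by auto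
  have AN: "AN > 0" unfolding AN_def using AA_pos phi_pos by simp
  have mpos: "real m > 0" using m by simp
  have "log phi (AN * db * P) < log phi (real m)"
    unfolding AN_def using log_AN[of db P s N] db P u1 phi_pos phi_ne1 unfolding db_def P_def
    by simp
  then have h1: "AN * db * P < real m" using AN db P mpos phi_gt1 by simp
  have "log phi (real m * P) < log phi (AN * dc * 1)"
    unfolding AN_def using log_AN[of dc 1 s N] dc u2 mpos phi_pos phi_ne1 unfolding dc_def P_def
    by (simp add: log_mult_pos)
  then have h2: "real m * P < AN * dc" using AN dc P mpos phi_gt1 by simp
  have "real s * phi \<le> 2 * real s * phi" using phi_pos by simp
  also have "\<dots> \<le> real m * (1 - Q)" using T unfolding Q_def .
  also have "\<dots> \<le> real m * (P - 1)" using P mpos by simp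
  finally have T': "real s * phi \<le> real m * (P - 1)" .
  note r = lo_arith[OF AN db(1) dc(1) P(1) phi_gt1 h1 h2 of_nat_0_le_iff T']
  have lenbs: "length bs = s" using Fs_iff[of s bs] s bs by simp
  have lensc: "length ?sc = s"
  proof -
    have "?sc \<in> Fs s \<or> ?sc = last_succ s" using succ_cases[of s bs] s bs by auto
    then show ?thesis
    proof
      assume "?sc \<in> Fs s" then show ?thesis using Fs_iff[of s ?sc] s by auto
    qed (use last_succ_len[OF s] in simp)
  qed
  have z1: "\<bar>real (zval (bs @ replicate N 0)) - AN * db\<bar> \<le> real s"
    using zval_asym[of bs N] bf(5) unfolding lenbs AN_eq AN_def db_def by blast
  have z2: "\<bar>real (zval (?sc @ replicate N 0)) - AN * dc\<bar> \<le> real s"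
    using zval_asym[of ?sc N] bf(4) unfolding lensc AN_eq AN_def dc_def by blast
  have "real (zval (bs @ replicate N 0)) \<le> real m" using z1 r by linarith
  moreover have "real m < real (zval (?sc @ replicate N 0))" using z2 r by linarith
  ultimately have "zval (bs @ replicate N 0) \<le> m \<and> m < zval (?sc @ replicate N 0)" by simp
  then show ?thesis using LB_interval[OF s bs m] by blast
qed

lemma up_step:
  assumes s: "s \<ge> 2" and bs: "bs \<in> Fs s" and eta: "\<eta> > 0" and m: "m > 0"
    and LB: "LB s m = Some bs"
    and T: "2 * real s * phi \<le> real m * (1 - phi powr (-\<eta>))"
  shows "\<exists>N::nat. log phi (dotw bs) - \<eta> \<le> log phi (real m) - log phi (AA s) - real N
          \<and> log phi (real m) - log phi (AA s) - real N \<le> log phi (dotw (succ_block s bs)) + \<eta>"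
proof -
  let ?sc = "succ_block s bs"
  obtain N where N: "zval (bs @ replicate N 0) \<le> m" "m < zval (?sc @ replicate N 0)"
    using LB_interval[OF s bs m] LB by blast
  define P where "P = phi powr \<eta>"
  define Q where "Q = phi powr (-\<eta>)"
  define AN where "AN = AA s * phi ^ N"
  define db where "db = dotw bs"
  define dc where "dc = dotw ?sc"
  note bf = block_facts[OF s bs]
  have PQ: "P > 1" "Q > 0" "Q < 1" "P * Q = 1" using PQ_facts[OF eta] unfolding P_def Q_def by auto
  have db: "db \<ge> 1" "db > 0" using bf unfolding db_def by auto
  have dc: "dc \<le> phi" "dc \<ge> 1" "dc > 0" using bf unfolding dc_def db_def by auto
  have AN: "AN > 0" unfolding AN_def using AA_pos phi_pos by simp
  have mpos: "real m > 0" using m by simp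
  have lenbs: "length bs = s" using Fs_iff[of s bs] s bs by simp
  have lensc: "length ?sc = s"
  proof -
    have "?sc \<in> Fs s \<or> ?sc = last_succ s" using succ_cases[of s bs] s bs by auto
    then show ?thesis
    proof
      assume "?sc \<in> Fs s" then show ?thesis using Fs_iff[of s ?sc] s by auto
    qed (use last_succ_len[OF s] in simp)
  qed
  have z1: "\<bar>real (zval (bs @ replicate N 0)) - AN * db\<bar> \<le> real s"
    using zval_asym[of bs N] bf(5) unfolding lenbs AN_eq AN_def db_def by blast
  have z2: "\<bar>real (zval (?sc @ replicate N 0)) - AN * dc\<bar> \<le> real s"
    using zval_asym[of ?sc N] bf(4) unfolding lensc AN_eq AN_def dc_def by blast
  have h1: "AN * db - real s \<le> real m" using z1 N(1) by linarith
  have h2: "real m < AN * dc + real s" using z2 N(2) by linarith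
  have r: "AN * db * Q \<le> real m" "real m \<le> AN * dc * P"
    using up_arith[OF AN db(1) dc(2) dc(1) PQ(2) PQ(3) PQ(4) phi_gt1 h1 h2 of_nat_0_le_iff] T
    unfolding Q_def by auto
  have "log phi (AN * db * Q) \<le> log phi (real m)"
    using r AN db PQ mpos phi_gt1 by simp
  then have l1: "log phi (dotw bs) - \<eta> \<le> log phi (real m) - log phi (AA s) - real N"
    unfolding AN_def using log_AN[of db Q s N] db PQ phi_pos phi_ne1 unfolding db_def Q_def
    by simp
  have "log phi (real m) \<le> log phi (AN * dc * P)"
    using r AN dc PQ mpos phi_gt1 by simp
  then have l2: "log phi (real m) - log phi (AA s) - real N \<le> log phi (dotw ?sc) + \<eta>"
    unfolding AN_def using log_AN[of dc P s N] dc PQ phi_pos phi_ne1 unfolding dc_def P_def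
    by simp
  show ?thesis using l1 l2 by blast
qed


lemma floor_ind:
  assumes "0 \<le> L" "L \<le> 1"
  shows "(if frac y < L then 1 else 0 :: real) = real_of_int (\<lfloor>y\<rfloor> - \<lfloor>y - L\<rfloor>)"
proof -
  have y: "y = of_int \<lfloor>y\<rfloor> + frac y" by (simp add: frac_def)
  have f: "0 \<le> frac y" "frac y < 1" by (auto simp: frac_lt_1)
  show ?thesis
  proof (cases "frac y < L")
    case True
    have "\<lfloor>y - L\<rfloor> = \<lfloor>y\<rfloor> - 1"
      by (rule floor_unique) (use True f assms y in \<open>simp; linarith\<close>)+
    then show ?thesis using True by simp
  next
    case False
    have "\<lfloor>y - L\<rfloor> = \<lfloor>y\<rfloor>"
      by (rule floor_unique) (use False f assms y in \<open>simp; linarith\<close>)+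
    then show ?thesis using False by simp
  qed
qed

lemma tele_identity:
  fixes g :: "int \<Rightarrow> real"
  shows "(\<Sum>k=1..n. g (int k) - g (int k - int M)) =
     (\<Sum>i<M. g (int n - int i)) - (\<Sum>i<M. g (- int i))"
proof (induction n)
  case 0 then show ?case by simp
next
  case (Suc n)
  have "(\<Sum>i<M. g (int (Suc n) - int i)) - (\<Sum>i<M. g (int n - int i))
      = (\<Sum>i<M. g (int (Suc n) - int i) - g (int (Suc n) - int (Suc i)))"
    by (simp add: sum_subtractf)
  also have "\<dots> = g (int (Suc n)) - g (int (Suc n) - int M)"
    using sum_lessThan_telescope'[of "\<lambda>i. g (int (Suc n) - int i)" M] by simp
  finally show ?case using Suc by simp
qed

lemma tele_bound:
  fixes g :: "int \<Rightarrow> real"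
  assumes "\<And>t. -1 \<le> g t \<and> g t \<le> 0"
  shows "\<bar>(\<Sum>k=1..n. g (int k) - g (int k - int M))\<bar> \<le> real M"
proof -
  have a: "- real M \<le> (\<Sum>i<M. g (int n - int i))" "(\<Sum>i<M. g (int n - int i)) \<le> 0"
    using sum_mono[of "{..<M}" "\<lambda>_. -1" "\<lambda>i. g (int n - int i)"]
          sum_mono[of "{..<M}" "\<lambda>i. g (int n - int i)" "\<lambda>_. 0"] assms by auto
  have b: "- real M \<le> (\<Sum>i<M. g (- int i))" "(\<Sum>i<M. g (- int i)) \<le> 0"
    using sum_mono[of "{..<M}" "\<lambda>_. -1" "\<lambda>i. g (- int i)"]
          sum_mono[of "{..<M}" "\<lambda>i. g (- int i)" "\<lambda>_. 0"] assms by auto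
  show ?thesis unfolding tele_identity using a b by linarith
qed

lemma S_bound:
  fixes \<alpha> \<beta> \<delta> :: real and p :: int and q j :: nat
  assumes qa: "real q * \<alpha> = real_of_int p + \<delta>"
  shows "\<bar>(\<Sum>k=1..n. real_of_int (\<lfloor>real k * \<alpha> + \<beta>\<rfloor> - \<lfloor>real k * \<alpha> + \<beta> - real j * \<delta>\<rfloor>))
          - real n * real j * \<delta>\<bar> \<le> real (j * q)"
proof -
  define G where "G t = real_of_int \<lfloor>real_of_int t * \<alpha> + \<beta>\<rfloor> - (real_of_int t * \<alpha> + \<beta>)" for t :: int
  have Gb: "-1 \<le> G t \<and> G t \<le> 0" for t unfolding G_def by linarith
  have trm: "real_of_int (\<lfloor>real k * \<alpha> + \<beta>\<rfloor> - \<lfloor>real k * \<alpha> + \<beta> - real j * \<delta>\<rfloor>)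
      = G (int k) - G (int k - int (j * q)) + real j * \<delta>" for k :: nat
  proof -
    have e2: "real j * \<delta> = real j * real q * \<alpha> - real j * real_of_int p"
    proof -
      have "real j * (real q * \<alpha>) = real j * (real_of_int p + \<delta>)" using qa by simp
      then show ?thesis by (simp add: algebra_simps)
    qed
    have e0: "real k * \<alpha> + \<beta> - real j * \<delta>
        = real_of_int (int k - int (j * q)) * \<alpha> + \<beta> + real_of_int (int j * p)"
      using e2 by (simp add: algebra_simps)
    have e1: "\<lfloor>real k * \<alpha> + \<beta> - real j * \<delta>\<rfloor>
        = \<lfloor>real_of_int (int k - int (j * q)) * \<alpha> + \<beta>\<rfloor> + int j * p"
      unfolding e0 by (rule floor_add_int[symmetric])
    have e3: "(real k - real (j * q)) * \<alpha> = real k * \<alpha> - real j * real q * \<alpha>"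
      by (simp add: algebra_simps)
    show ?thesis unfolding G_def e1
      by (simp only: of_int_diff of_int_add of_int_mult of_int_of_nat_eq) (use e2 e3 in linarith)
  qed
  have "(\<Sum>k=1..n. real_of_int (\<lfloor>real k * \<alpha> + \<beta>\<rfloor> - \<lfloor>real k * \<alpha> + \<beta> - real j * \<delta>\<rfloor>))
      = (\<Sum>k=1..n. G (int k) - G (int k - int (j * q))) + real n * real j * \<delta>"
    unfolding trm by (simp add: sum.distrib)
  moreover have "\<bar>(\<Sum>k=1..n. G (int k) - G (int k - int (j * q)))\<bar> \<le> real (j * q)"
    using tele_bound[where g=G and n=n and M="j * q"] Gb by blast
  ultimately show ?thesis by simp
qed


lemma count_as_sum:
  fixes x :: "nat \<Rightarrow> real" and n :: nat
  assumes "0 \<le> L" "L \<le> 1"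
  shows "real (card {k \<in> {1..n}. frac (x k) < L})
       = (\<Sum>k=1..n. real_of_int (\<lfloor>x k\<rfloor> - \<lfloor>x k - L\<rfloor>))"
proof -
  have "real (card {k \<in> {1..n}. frac (x k) < L}) = (\<Sum>k\<in>{k \<in> {1..n}. frac (x k) < L}. 1)"
    by simp
  also have "\<dots> = (\<Sum>k=1..n. if frac (x k) < L then 1 else 0)"
    by (rule sum.inter_filter) simp
  also have "\<dots> = (\<Sum>k=1..n. real_of_int (\<lfloor>x k\<rfloor> - \<lfloor>x k - L\<rfloor>))"
    by (rule sum.cong) (use floor_ind[OF assms] in auto)
  finally show ?thesis .
qed

lemma equidist:
  fixes \<alpha> \<beta> L :: real
  assumes irr: "\<alpha> \<notin> \<rat>" and L: "0 \<le> L" "L \<le> 1"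
  shows "(\<lambda>n. real (card {k \<in> {1..n}. frac (real k * \<alpha> + \<beta>) < L}) / real n) \<longlonglongrightarrow> L"
proof (rule LIMSEQ_I)
  fix r :: real assume r: "r > 0"
  define e where "e = min r 1 / 4"
  have e: "e > 0" "e \<le> 1" "e \<le> r / 4" using r unfolding e_def by auto
  obtain q where q: "q > 0" "\<bar>frac (real q * \<alpha>) - e\<bar> < e"
    using Kronecker_approx_1_explicit[OF irr, of e e] e by auto
  define \<delta> where "\<delta> = frac (real q * \<alpha>)"
  define p where "p = \<lfloor>real q * \<alpha>\<rfloor>"
  have d0: "\<delta> > 0" "\<delta> < 2 * e" using q(2) unfolding \<delta>_def abs_less_iff by linarith+
  have d: "\<delta> > 0" "\<delta> < r / 2" using d0 e by linarith+
  have qa: "real q * \<alpha> = real_of_int p + \<delta>" unfolding \<delta>_def p_def frac_def by simp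
  define m where "m = nat \<lfloor>L / \<delta>\<rfloor>"
  have m1: "real m * \<delta> \<le> L"
  proof -
    have "real m \<le> L / \<delta>" unfolding m_def using L d by (simp add: of_nat_nat)
    then show ?thesis using d by (simp add: field_simps)
  qed
  have m2: "L \<le> (real m + 1) * \<delta>"
  proof -
    have "L / \<delta> \<le> real m + 1" unfolding m_def using L d
      by (simp add: of_nat_nat)
    then show ?thesis using d by (simp add: field_simps)
  qed
  define x where "x k = real k * \<alpha> + \<beta>" for k :: nat
  define C where "C = real ((m + 1) * q)"
  have C: "C \<ge> 0" unfolding C_def by simp
  have bound: "\<bar>real (card {k \<in> {1..n}. frac (x k) < L}) - real n * L\<bar> \<le> real n * \<delta> + C" for n
  proof -
    let ?c = "(\<Sum>k=1..n. real_of_int (\<lfloor>x k\<rfloor> - \<lfloor>x k - L\<rfloor>))"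
    let ?S = "\<lambda>j::nat. (\<Sum>k=1..n. real_of_int (\<lfloor>x k\<rfloor> - \<lfloor>x k - real j * \<delta>\<rfloor>))"
    have S: "\<bar>?S j - real n * real j * \<delta>\<bar> \<le> real (j * q)" for j
      unfolding x_def by (rule S_bound[OF qa])
    have lo: "?S m \<le> ?c"
      by (rule sum_mono) (use m1 in \<open>auto intro: floor_mono\<close>)
    have hi: "?c \<le> ?S (m + 1)"
      by (rule sum_mono) (use m2 in \<open>auto intro: floor_mono simp: algebra_simps\<close>)
    have s1: "?S m \<ge> real n * real m * \<delta> - real (m * q)" using S[of m] by linarith
    have s2: "?S (m + 1) \<le> real n * real (m + 1) * \<delta> + real ((m + 1) * q)"
      using S[of "m + 1"] by linarith
    have "real n * (L - \<delta>) \<le> real n * (real m * \<delta>)"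
      using m2 by (intro mult_left_mono) (auto simp: algebra_simps)
    then have t1: "real n * real m * \<delta> \<ge> real n * (L - \<delta>)" by (simp add: mult.assoc)
    have "real n * (real (m + 1) * \<delta>) \<le> real n * (L + \<delta>)"
      using m1 by (intro mult_left_mono) (auto simp: algebra_simps)
    then have t2: "real n * real (m + 1) * \<delta> \<le> real n * (L + \<delta>)" by (simp add: mult.assoc)
    have t3: "real (m * q) \<le> C" unfolding C_def by simp
    have "real n * (L - \<delta>) - C \<le> ?c" "?c \<le> real n * (L + \<delta>) + C"
      using lo hi s1 s2 t1 t2 t3 unfolding C_def by linarith+
    then show ?thesis using count_as_sum[OF L, of n x] by (simp add: algebra_simps abs_le_iff)
  qed
  define no where "no = nat \<lceil>2 * C / r\<rceil> + 1"
  show "\<exists>no. \<forall>n\<ge>no. norm (real (card {k \<in> {1..n}. frac (real k * \<alpha> + \<beta>) < L}) / real n - L) < r"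
  proof (intro exI allI impI)
    fix n assume n: "no \<le> n"
    have npos: "real n > 0" using n unfolding no_def by simp
    have "real n > 2 * C / r" using n unfolding no_def by linarith
    then have nC: "C < real n * (r / 2)" using r by (simp add: field_simps)
    let ?cnt = "real (card {k \<in> {1..n}. frac (x k) < L})"
    have "\<bar>?cnt / real n - L\<bar> = \<bar>?cnt - real n * L\<bar> / real n"
      using npos by (simp add: field_simps)
    also have "\<dots> \<le> (real n * \<delta> + C) / real n"
      using bound[of n] npos by (simp add: divide_right_mono)
    also have "\<dots> < (real n * (r / 2) + real n * (r / 2)) / real n"
    proof -
      have nd: "real n * \<delta> < real n * (r / 2)" using d npos by simp
      then have "real n * \<delta> + C < real n * (r / 2) + real n * (r / 2)" using nC by linarith
      then show ?thesis using npos by (rule divide_strict_right_mono)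
    qed
    also have "\<dots> = r" using npos by (simp add: field_simps)
    finally show "norm (real (card {k \<in> {1..n}. frac (real k * \<alpha> + \<beta>) < L}) / real n - L) < r"
      unfolding x_def by simp
  qed
qed


lemma b_gt1:
  fixes K :: "nat \<Rightarrow> nat" and a b :: real
  assumes Kpos: "\<forall>n\<ge>1. K n > 0" and apos: "a > 0" and bpos: "b > 0"
    and irr: "log phi b \<notin> \<rat>"
    and asym: "(\<lambda>n. real (K n) / (a * b ^ n)) \<longlonglongrightarrow> 1"
  shows "b > 1"
proof (rule ccontr)
  assume "\<not> b > 1"
  moreover have "b \<noteq> 1" using irr by auto
  ultimately have b1: "b < 1" by simp
  have "(\<lambda>n. a * b ^ n) \<longlonglongrightarrow> a * 0"
    by (intro tendsto_mult tendsto_const LIMSEQ_power_zero) (use bpos b1 in simp)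
  then have ev1: "eventually (\<lambda>n. a * b ^ n < 1 / 2) sequentially"
    by (intro order_tendstoD(2)) auto
  have ev2: "eventually (\<lambda>n. real (K n) / (a * b ^ n) < 2) sequentially"
    using asym by (intro order_tendstoD(2)) auto
  have ev3: "eventually (\<lambda>n. n \<ge> 1) sequentially" by (rule eventually_ge_at_top)
  have "eventually (\<lambda>n. False) sequentially"
    using ev1 ev2 ev3
  proof eventually_elim
    case (elim n)
    have ab: "a * b ^ n > 0" using apos bpos by simp
    have "real (K n) \<ge> 1" using Kpos elim(3) by (simp add: Suc_le_eq)
    then have "real (K n) / (a * b ^ n) \<ge> 1 / (a * b ^ n)" using ab by (simp add: divide_right_mono)
    moreover have "1 / (a * b ^ n) > 2" using ab elim(1) by (simp add: field_simps)
    ultimately show False using elim(2) by linarith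
  qed
  then show False by simp
qed


theorem theorem3p8:
  fixes K :: "nat \<Rightarrow> nat" and a b :: real and s :: nat and bs :: "nat list"
  assumes Kpos: "\<forall>n\<ge>1. K n > 0"
    and apos: "a > 0" and bpos: "b > 0"
    and irr: "log phi b \<notin> \<rat>"
    and asym: "(\<lambda>n. real (K n) / (a * b ^ n)) \<longlonglongrightarrow> 1"
    and s2: "s \<ge> 2"
    and bsF: "bs \<in> Fs s"
  shows "(\<lambda>n. real (card {k \<in> {1..n}. LB s (K k) = Some bs}) / real n)
           \<longlonglongrightarrow> log phi (dotw (succ_block s bs) / dotw bs)"
proof -
  let ?sc = "succ_block s bs"
  note bf = block_facts[OF s2 bsF]
  define c0 where "c0 = log phi (dotw bs)"
  define d0 where "d0 = log phi (dotw ?sc)"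
  define L where "L = d0 - c0"
  have dpos: "dotw bs > 0" "dotw ?sc > 0" using bf by auto
  have "log phi 1 \<le> log phi (dotw bs)" using bf phi_gt1 by (subst log_le_cancel_iff) auto
  then have c0: "0 \<le> c0" unfolding c0_def by simp
  have "log phi (dotw bs) < log phi (dotw ?sc)" using bf phi_gt1 dpos by (subst log_less_cancel_iff) auto
  then have cd: "c0 < d0" unfolding c0_def d0_def .
  have "log phi (dotw ?sc) \<le> log phi phi" using bf phi_gt1 dpos by (subst log_le_cancel_iff) auto
  then have d0: "d0 \<le> 1" unfolding d0_def using phi_gt1 by simp
  have L: "0 < L" "L \<le> 1" using c0 cd d0 unfolding L_def by auto
  have goalR: "log phi (dotw ?sc / dotw bs) = L"
    using dpos unfolding L_def c0_def d0_def by (simp add: log_divide)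
  have b1: "b > 1" using b_gt1[OF Kpos apos bpos irr asym] .
  define \<alpha> where "\<alpha> = log phi b"
  have \<alpha>: "\<alpha> > 0" unfolding \<alpha>_def using b1 phi_gt1 by simp
  have \<alpha>irr: "\<alpha> \<notin> \<rat>" unfolding \<alpha>_def using irr .
  define A where "A = AA s"
  define \<beta> where "\<beta> = log phi a - log phi A"
  define x where "x k = real k * \<alpha> + \<beta>" for k :: nat
  define e where "e k = log phi (real (K k) / (a * b ^ k))" for k :: nat
  define \<rho> where "\<rho> m = log phi (real m) - log phi A" for m :: nat
  have rho_eq: "\<rho> (K k) = x k + e k" if k: "k \<ge> 1" for k
  proof -
    have Kp: "real (K k) > 0" using Kpos k by simp
    have ab: "a * b ^ k > 0" using apos bpos by simp
    have abne: "a * b ^ k \<noteq> 0" using ab by linarith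
    have "real (K k) = (real (K k) / (a * b ^ k)) * (a * b ^ k)" using abne by (simp add: field_simps)
    then have "log phi (real (K k)) = log phi (real (K k) / (a * b ^ k)) + log phi a + log phi (b ^ k)"
      using Kp ab apos bpos by (metis log_mult_pos divide_pos_pos zero_less_power add.assoc)
    then show ?thesis unfolding \<rho>_def x_def e_def \<beta>_def \<alpha>_def
      using bpos by (simp add: log_nat_power)
  qed
  have e_lim: "e \<longlonglongrightarrow> 0"
  proof -
    have "(\<lambda>k. log phi (real (K k) / (a * b ^ k))) \<longlonglongrightarrow> log phi 1"
      by (rule tendsto_log[OF tendsto_const asym]) (use phi_gt1 in auto)
    then show ?thesis unfolding e_def by simp
  qed
  show ?thesis
    unfolding goalR
  proof (rule tendstoI)
    fix r :: real assume r: "r > 0"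
    define \<eta> where "\<eta> = min (r / 16) (L / 8)"
    have eta: "\<eta> > 0" "4 * \<eta> \<le> r / 4" "4 * \<eta> \<le> L / 2" "\<eta> < 1"
      using r L unfolding \<eta>_def by auto
    define \<theta> where "\<theta> = 1 - phi powr (-\<eta>)"
    have th: "\<theta> > 0" using PQ_facts[OF eta(1)] unfolding \<theta>_def by auto
    define T where "T = 2 * real s * phi / \<theta> + 1"
    have "0 \<le> 2 * real s * phi / \<theta>"
      by (intro divide_nonneg_pos mult_nonneg_nonneg) (use th phi_pos in auto)
    then have Tpos: "T > 0" unfolding T_def by linarith
    define R where "R = max 1 (log phi T - log phi A)"
    define good where "good k \<longleftrightarrow> 1 \<le> k \<and> \<bar>e k\<bar> < \<eta> \<and> x k \<ge> R + 1" for k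
    have ev_good: "eventually good sequentially"
    proof -
      have "eventually (\<lambda>k. e k < \<eta>) sequentially"
        using e_lim eta by (intro order_tendstoD(2)) auto
      moreover have "eventually (\<lambda>k. e k > -\<eta>) sequentially"
        using e_lim eta by (intro order_tendstoD(1)) auto
      moreover have "eventually (\<lambda>k. k \<ge> 1) sequentially" by (rule eventually_ge_at_top)
      moreover have "eventually (\<lambda>k. x k \<ge> R + 1) sequentially"
      proof -
        define k1 where "k1 = nat \<lceil>(R + 1 - \<beta>) / \<alpha>\<rceil>"
        have "x k \<ge> R + 1" if "k \<ge> k1" for k
        proof -
          have "real k \<ge> (R + 1 - \<beta>) / \<alpha>" using that unfolding k1_def by linarith
          then have "real k * \<alpha> \<ge> R + 1 - \<beta>" using \<alpha> by (simp add: field_simps)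
          then show ?thesis unfolding x_def by simp
        qed
        then show ?thesis unfolding eventually_sequentially by blast
      qed
      ultimately show ?thesis unfolding good_def
        by eventually_elim auto
    qed
    have good_T: "real (K k) > 0 \<and> 2 * real s * phi \<le> real (K k) * \<theta> \<and> \<rho> (K k) \<ge> R"
      if g: "good k" for k
    proof -
      have k1: "k \<ge> 1" and ek: "\<bar>e k\<bar> < \<eta>" and xk: "x k \<ge> R + 1" using g unfolding good_def by auto
      have Kp: "real (K k) > 0" using Kpos k1 by simp
      have rR: "\<rho> (K k) \<ge> R" using rho_eq[OF k1] ek xk eta by linarith
      then have "log phi (real (K k)) \<ge> log phi T" unfolding \<rho>_def R_def by linarith
      then have "real (K k) \<ge> T" using Kp Tpos phi_gt1 by simp
      then have "real (K k) * \<theta> \<ge> T * \<theta>" using th by simp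
      moreover have "T * \<theta> \<ge> 2 * real s * phi" unfolding T_def using th by (simp add: field_simps)
      ultimately show ?thesis using Kp rR by linarith
    qed
    have good_Lo: "LB s (K k) = Some bs"
      if g: "good k" and fr: "frac (real k * \<alpha> + (\<beta> - c0 - 2 * \<eta>)) < L - 4 * \<eta>" for k
    proof -
      have k1: "k \<ge> 1" and ek: "\<bar>e k\<bar> < \<eta>" using g unfolding good_def by auto
      note gT = good_T[OF g]
      define y where "y = x k - c0 - 2 * \<eta>"
      define z where "z = \<lfloor>y\<rfloor>"
      have fy: "frac y < L - 4 * \<eta>" using fr unfolding y_def x_def by (simp add: algebra_simps)
      have yz: "y - of_int z = frac y" "frac y \<ge> 0" unfolding z_def frac_def by auto
      have r1: "\<rho> (K k) - of_int z > c0 + \<eta>" using rho_eq[OF k1] ek yz unfolding y_def by linarith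
      have r2: "\<rho> (K k) - of_int z < d0 - \<eta>" using rho_eq[OF k1] ek yz fy unfolding y_def L_def by linarith
      have "R \<ge> 1" unfolding R_def by simp
      then have zpos: "z \<ge> 0" using r2 gT d0 eta by linarith
      define N where "N = nat z"
      have Nz: "real N = of_int z" unfolding N_def using zpos by simp
      show ?thesis
        apply (rule lo_step[OF s2 bsF eta(1), of "K k" N])
        using gT r1 r2 Nz unfolding \<rho>_def c0_def d0_def A_def \<theta>_def by auto
    qed
    have good_Up: "frac (real k * \<alpha> + (\<beta> - c0 + 2 * \<eta>)) < min (L + 4 * \<eta>) 1"
      if g: "good k" and P: "LB s (K k) = Some bs" for k
    proof -
      have k1: "k \<ge> 1" and ek: "\<bar>e k\<bar> < \<eta>" using g unfolding good_def by auto
      note gT = good_T[OF g]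
      have Kp: "K k > 0" using gT by simp
      obtain N where N: "c0 - \<eta> \<le> \<rho> (K k) - real N" "\<rho> (K k) - real N \<le> d0 + \<eta>"
        using up_step[OF s2 bsF eta(1) Kp P] gT unfolding \<rho>_def c0_def d0_def A_def \<theta>_def by auto
      define y where "y = x k - c0 + 2 * \<eta> - real N"
      have y: "0 < y" "y < L + 4 * \<eta>" using N rho_eq[OF k1] ek unfolding y_def L_def by linarith+
      have "frac (real k * \<alpha> + (\<beta> - c0 + 2 * \<eta>)) = frac (y + of_int (int N))"
        unfolding y_def x_def by (simp add: algebra_simps)
      also have "\<dots> = frac y" by (rule frac_add_of_int_right)
      finally have fe: "frac (real k * \<alpha> + (\<beta> - c0 + 2 * \<eta>)) = frac y" .
      have "frac y \<le> y" using y unfolding frac_def by simp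
      moreover have "frac y < 1" by (rule frac_lt_1)
      ultimately show ?thesis using fe y by simp
    qed
    obtain k0 where k0: "\<And>k. k \<ge> k0 \<Longrightarrow> good k"
      using ev_good unfolding eventually_sequentially by blast
    define cP where "cP n = real (card {k \<in> {1..n}. LB s (K k) = Some bs})" for n
    define cLo where "cLo n = real (card {k \<in> {1..n}. frac (real k * \<alpha> + (\<beta> - c0 - 2 * \<eta>)) < L - 4 * \<eta>})" for n
    define cUp where "cUp n = real (card {k \<in> {1..n}. frac (real k * \<alpha> + (\<beta> - c0 + 2 * \<eta>)) < min (L + 4 * \<eta>) 1})" for n
    have lo_le: "cLo n \<le> cP n + real k0" for n
    proof -
      have "{k \<in> {1..n}. frac (real k * \<alpha> + (\<beta> - c0 - 2 * \<eta>)) < L - 4 * \<eta>}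
          \<subseteq> {k \<in> {1..n}. LB s (K k) = Some bs} \<union> {..<k0}"
        using good_Lo k0 by (auto simp: not_less)
      then have "card {k \<in> {1..n}. frac (real k * \<alpha> + (\<beta> - c0 - 2 * \<eta>)) < L - 4 * \<eta>}
          \<le> card ({k \<in> {1..n}. LB s (K k) = Some bs} \<union> {..<k0})"
        by (intro card_mono) auto
      also have "\<dots> \<le> card {k \<in> {1..n}. LB s (K k) = Some bs} + card {..<k0}"
        by (rule card_Un_le)
      finally show ?thesis unfolding cLo_def cP_def by simp
    qed
    have up_le: "cP n \<le> cUp n + real k0" for n
    proof -
      have "{k \<in> {1..n}. LB s (K k) = Some bs}
          \<subseteq> {k \<in> {1..n}. frac (real k * \<alpha> + (\<beta> - c0 + 2 * \<eta>)) < min (L + 4 * \<eta>) 1} \<union> {..<k0}"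
        using good_Up k0 by (auto simp: not_less)
      then have "card {k \<in> {1..n}. LB s (K k) = Some bs}
          \<le> card ({k \<in> {1..n}. frac (real k * \<alpha> + (\<beta> - c0 + 2 * \<eta>)) < min (L + 4 * \<eta>) 1} \<union> {..<k0})"
        by (intro card_mono) auto
      also have "\<dots> \<le> card {k \<in> {1..n}. frac (real k * \<alpha> + (\<beta> - c0 + 2 * \<eta>)) < min (L + 4 * \<eta>) 1} + card {..<k0}"
        by (rule card_Un_le)
      finally show ?thesis unfolding cUp_def cP_def by simp
    qed
    have limLo: "(\<lambda>n. cLo n / real n) \<longlonglongrightarrow> L - 4 * \<eta>"
      unfolding cLo_def by (rule equidist[OF \<alpha>irr]) (use eta L in auto)
    have limUp: "(\<lambda>n. cUp n / real n) \<longlonglongrightarrow> min (L + 4 * \<eta>) 1"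
      unfolding cUp_def by (rule equidist[OF \<alpha>irr]) (use eta L in auto)
    have limk: "(\<lambda>n. real k0 / real n) \<longlonglongrightarrow> 0" by (rule lim_const_over_n)
    have e1: "eventually (\<lambda>n. cLo n / real n > L - 4 * \<eta> - r / 4) sequentially"
      using limLo r by (intro order_tendstoD(1)) auto
    have e2: "eventually (\<lambda>n. cUp n / real n < min (L + 4 * \<eta>) 1 + r / 4) sequentially"
      using limUp r by (intro order_tendstoD(2)) auto
    have e3: "eventually (\<lambda>n. real k0 / real n < r / 4) sequentially"
      using limk r by (intro order_tendstoD(2)) auto
    have e4: "eventually (\<lambda>n. n \<ge> 1) sequentially" by (rule eventually_ge_at_top)
    show "eventually (\<lambda>n. dist (real (card {k \<in> {1..n}. LB s (K k) = Some bs}) / real n) L < r) sequentially"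
      using e1 e2 e3 e4
    proof eventually_elim
      case (elim n)
      have np: "real n > 0" using elim(4) by simp
      have a1: "cP n / real n \<ge> cLo n / real n - real k0 / real n"
        using lo_le[of n] np by (simp add: diff_divide_distrib[symmetric] divide_right_mono)
      have a2: "cP n / real n \<le> cUp n / real n + real k0 / real n"
        using up_le[of n] np by (simp add: add_divide_distrib[symmetric] divide_right_mono)
      have mn: "min (L + 4 * \<eta>) 1 \<le> L + 4 * \<eta>" by simp
      have "cP n / real n - L < r" using a1 a2 elim(1,2,3) eta mn by linarith
      moreover have "L - cP n / real n < r" using a1 a2 elim(1,2,3) eta mn by linarith
      ultimately have "\<bar>cP n / real n - L\<bar> < r" by (simp add: abs_less_iff)
      then show ?case unfolding cP_def dist_real_def .
    qed
  qed
qed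


end
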